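(* Consider $\min_u F(u)+G(u)$ under the assumptions below, with $G$ additionally convex. Let $\{(y^t,z^t,x^t)\}$ be generated by the modified PR iteration with $\gamma\in(0,\frac1{12L_F})$, and let $(\bar y,\bar z,\bar x)$ be any cluster point of this sequence. Then $\bar y=\bar z$ and $\bar z$ is a minimizer of $F+G$. Moreover, for every $N\ge1$, \[ F(\bar z^N)+G(\bar z^N)-F(\bar z)-G(\bar z)\le\frac{1}{40\gamma N L_F}\left(\frac1\gamma-5L_F\right)\|x^0-\bar x\|^2, \] where $\bar z^N:=\frac1N\sum_{t=1}^N z^t$, and \[ \min_{0\le t\le N}\|x^{t+1}-x^t\|=o\!\left(\frac{1}{\sqrt N}\right)\quad (N\to\infty). \]
   Context: Assumptions: $F:\mathbb{R}^n\to\mathbb{R}$ is convex and differentiable with $\nabla F$ Lipschitz continuous with modulus at most $L_F>0$; $G:\mathbb{R}^n\to(-\infty,\infty]$ is proper, lower semicontinuous, and $\operatorname{Argmin}_u\{\tau G(u)+\frac12\|u-w\|^2\}$ is nonempty for every $w$ and every $\tau>0$; $F+G$ is coercive. Modified PR iteration: given $x^0$ and $\gamma\in(0,\frac1{12L_F})$, for $t=0,1,\dots$: $y^{t+1}=\operatorname{argmin}_y\{F(y)+\frac{5L_F}{2}\|y\|^2+\frac1{2\gamma}\|y-x^t\|^2\}$; $z^{t+1}\in\operatorname{Argmin}_z\{G(z)-\frac{5L_F}{2}\|z\|^2+\frac1{2\gamma}\|2y^{t+1}-x^t-z\|^2\}$; $x^{t+1}=x^t+2(z^{t+1}-y^{t+1})$.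 *)

theory Defs
  imports "HOL-Analysis.Analysis" "HOL-Library.Landau_Symbols"
begin

definition proper_fun :: "('a \<Rightarrow> ereal) \<Rightarrow> bool" where
  "proper_fun G \<longleftrightarrow> (\<forall>x. G x \<noteq> -\<infinity>) \<and> (\<exists>x. G x \<noteq> \<infinity>)"

definition lsc_fun :: "('a::topological_space \<Rightarrow> ereal) \<Rightarrow> bool" where
  "lsc_fun G \<longleftrightarrow> (\<forall>x X. X \<longlonglongrightarrow> x \<longrightarrow> G x \<le> liminf (\<lambda>k. G (X k)))"

definition convex_efun :: "('a::real_vector \<Rightarrow> ereal) \<Rightarrow> bool" where
  "convex_efun G \<longleftrightarrow> (\<forall>x y t. 0 \<le> t \<and> t \<le> 1 \<longrightarrow>
      G ((1 - t) *\<^sub>R x + t *\<^sub>R y) \<le> ereal (1 - t) * G x + ereal t * G y)"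

definition coercive_efun :: "('a::real_normed_vector \<Rightarrow> ereal) \<Rightarrow> bool" where
  "coercive_efun H \<longleftrightarrow> (\<forall>M::real. \<exists>R. \<forall>x. norm x \<ge> R \<longrightarrow> H x \<ge> ereal M)"

end

theory Submission
  imports Defs
begin


lemma grad_ineq:
  fixes F :: "'a::euclidean_space \<Rightarrow> real"
  assumes cvx: "convex_on UNIV F"
    and der: "\<And>u. (F has_derivative (\<lambda>h. gradF u \<bullet> h)) (at u)"
  shows "F v \<ge> F u + gradF u \<bullet> (v - u)"
proof -
  define h where "h = v - u"
  define \<phi> where "\<phi> = (\<lambda>t::real. F (u + t *\<^sub>R h))"
  have c: "convex_on UNIV \<phi>"
    unfolding convex_on_def \<phi>_def
  proof (intro conjI allI impI ballI)
    show "convex (UNIV::real set)" by simp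
    fix x y :: real and a b :: real assume ab: "0 \<le> a" "0 \<le> b" "a + b = 1"
    have "u + (a *\<^sub>R x + b *\<^sub>R y) *\<^sub>R h = a *\<^sub>R (u + x *\<^sub>R h) + b *\<^sub>R (u + y *\<^sub>R h)"
      using ab by (simp add: algebra_simps) (metis scaleR_add_left scaleR_one)
    then show "F (u + (a *\<^sub>R x + b *\<^sub>R y) *\<^sub>R h) \<le> a * F (u + x *\<^sub>R h) + b * F (u + y *\<^sub>R h)"
      using cvx ab unfolding convex_on_def by auto
  qed
  have d: "(\<phi> has_field_derivative (gradF u \<bullet> h)) (at 0)"
  proof -
    have "((\<lambda>t::real. u + t *\<^sub>R h) has_derivative (\<lambda>t. t *\<^sub>R h)) (at 0)"
      by (auto intro!: derivative_eq_intros)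
    from has_derivative_compose[OF this der[of "u + 0 *\<^sub>R h"]]
    have "(\<phi> has_derivative (\<lambda>t. gradF u \<bullet> (t *\<^sub>R h))) (at 0)"
      unfolding \<phi>_def o_def by simp
    moreover have "(\<lambda>t. gradF u \<bullet> (t *\<^sub>R h)) = (*) (gradF u \<bullet> h)" by (auto simp: fun_eq_iff)
    ultimately show ?thesis unfolding has_field_derivative_def by simp
  qed
  have "\<phi> 1 - \<phi> 0 \<ge> (gradF u \<bullet> h) * (1 - 0)"
    by (rule convex_on_imp_above_tangent[OF c]) (use d in auto)
  then show ?thesis unfolding \<phi>_def h_def by simp
qed



lemma key_scalar:
  fixes r aa ab ae bb be ee \<phi> :: real
  assumes r: "0 < r" "r \<le> 5/12"
    and m: "(1-r)*(ab - bb) - be \<ge> 0"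
    and C: "ae \<ge> (5/(2*r)) * ee"
    and ee: "ee \<ge> 0"
    and phi: "\<phi> \<le> (1-r)*(ab - bb) + (r/5)*(aa - 2*ab + bb)"
  shows "\<phi> + ((5-7*r)/10)*(aa - 2*ab + bb) \<le> ((1-r)/(8*r)) *
     (((1+r)^2*aa + 2*(1+r)*ae + ee) -
      ((r-1)^2*aa + ee + 4*bb + 2*(r-1)*ae + 4*(r-1)*ab + 4*be))"
proof -
  have k: "(1-r)/(2*r) \<ge> 0" using r by simp
  have "(1-r)/(2*r) * ((1-r)*(ab - bb) - be) \<ge> 0" by (rule mult_nonneg_nonneg[OF k]) (use m in linarith)
  moreover have "(1-r)/(2*r) * (ae - (5/(2*r)) * ee) \<ge> 0" by (rule mult_nonneg_nonneg[OF k]) (use C in linarith)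
  moreover have "(1-r)/(2*r) * (5/(2*r)) * ee \<ge> 0" using k ee r by (intro mult_nonneg_nonneg) auto
  moreover have "((5-7*r)/10 - ((1-r)/2 - r/5)) = 0" by (simp add: field_simps)
  moreover have "((1-r)/(8*r)) *
     (((1+r)^2*aa + 2*(1+r)*ae + ee) -
      ((r-1)^2*aa + ee + 4*bb + 2*(r-1)*ae + 4*(r-1)*ab + 4*be))
     - ((1-r)*(ab - bb) + (r/5)*(aa - 2*ab + bb)) - ((5-7*r)/10)*(aa - 2*ab + bb)
     = (1-r)/(2*r) * ((1-r)*(ab - bb) - be) + (1-r)/(2*r) * (ae - (5/(2*r)) * ee)
       + (1-r)/(2*r) * (5/(2*r)) * ee"
    using r by (simp add: field_simps) (simp add: algebra_simps power2_eq_square)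
  ultimately show ?thesis using phi by linarith
qed

lemma key_vec:
  fixes a b e :: "'a::real_inner" and r \<phi> :: real
  assumes r: "0 < r" "r \<le> 5/12"
    and m: "((1-r) *\<^sub>R (a - b) - e) \<bullet> b \<ge> 0"
    and C: "e \<bullet> a \<ge> (5/(2*r)) * (e \<bullet> e)"
    and phi: "\<phi> \<le> (1-r)*((a-b) \<bullet> b) + (r/5)*((a-b) \<bullet> (a-b))"
  shows "\<phi> + ((5-7*r)/10)*(norm (a-b))^2 \<le> ((1-r)/(8*r)) *
     ((norm ((1+r) *\<^sub>R a + e))^2 - (norm ((1+r) *\<^sub>R a + e + 2 *\<^sub>R (b - a)))^2)"
proof -
  have h1: "(norm ((1+r) *\<^sub>R a + e))^2 = (1+r)^2*(a\<bullet>a) + 2*(1+r)*(a\<bullet>e) + e\<bullet>e"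
    unfolding power2_norm_eq_inner by (simp add: inner_add_left inner_add_right algebra_simps power2_eq_square inner_commute)
  have h2: "(norm ((1+r) *\<^sub>R a + e + 2 *\<^sub>R (b - a)))^2 = (r-1)^2*(a\<bullet>a) + e\<bullet>e + 4*(b\<bullet>b) + 2*(r-1)*(a\<bullet>e) + 4*(r-1)*(a\<bullet>b) + 4*(b\<bullet>e)"
    unfolding power2_norm_eq_inner by (simp add: inner_add_left inner_add_right inner_diff_left inner_diff_right algebra_simps power2_eq_square inner_commute)
  have h3: "(norm (a-b))^2 = a\<bullet>a - 2*(a\<bullet>b) + b\<bullet>b"
    unfolding power2_norm_eq_inner by (simp add: inner_diff_left inner_diff_right algebra_simps inner_commute)
  have m': "(1-r)*(a\<bullet>b - b\<bullet>b) - b\<bullet>e \<ge> 0"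
    using m by (simp add: inner_diff_left inner_diff_right algebra_simps inner_commute)
  have C': "a\<bullet>e \<ge> (5/(2*r)) * (e\<bullet>e)" using C by (simp add: inner_commute)
  have phi': "\<phi> \<le> (1-r)*(a\<bullet>b - b\<bullet>b) + (r/5)*(a\<bullet>a - 2*(a\<bullet>b) + b\<bullet>b)"
    using phi by (simp add: inner_diff_left inner_diff_right algebra_simps inner_commute)
  show ?thesis unfolding h1 h2 h3
    by (rule key_scalar[OF r m' C' _ phi']) simp
qed



lemma dir_lemma:
  fixes A B K :: real
  assumes K: "K \<ge> 0" and h: "\<And>t. 0 < t \<Longrightarrow> t \<le> 1 \<Longrightarrow> A \<le> B + t * K"
  shows "A \<le> B"
proof (rule ccontr)
  assume "\<not> A \<le> B"
  define t where "t = min 1 ((A - B) / (2 * (K + 1)))"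
  have t0: "0 < t" "t \<le> 1" using \<open>\<not> A \<le> B\<close> K by (auto simp: t_def)
  have "t * K \<le> (A - B) / (2 * (K + 1)) * K" using K t0 by (intro mult_right_mono) (auto simp: t_def)
  also have "\<dots> < A - B"
  proof -
    have "(A - B) / (2 * (K + 1)) * K = (A - B) * (K / (2 * (K + 1)))" by simp
    also have "\<dots> < (A - B) * 1"
      using K \<open>\<not> A \<le> B\<close> by (intro mult_strict_left_mono) (auto simp: field_simps)
    finally show ?thesis by simp
  qed
  finally show False using h[OF t0] by linarith
qed

locale prs =
  fixes F :: "'a::euclidean_space \<Rightarrow> real"
    and gradF :: "'a \<Rightarrow> 'a"
    and G :: "'a \<Rightarrow> ereal"
    and L \<gamma> :: real
    and x y z :: "nat \<Rightarrow> 'a"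
  assumes F_convex: "convex_on UNIV F"
    and F_grad: "\<And>u. (F has_derivative (\<lambda>h. gradF u \<bullet> h)) (at u)"
    and L_pos: "L > 0"
    and grad_Lip: "\<And>u v. norm (gradF u - gradF v) \<le> L * norm (u - v)"
    and G_proper: "proper_fun G"
    and G_lsc: "lsc_fun G"
    and G_convex: "convex_efun G"
    and coercive: "coercive_efun (\<lambda>u. ereal (F u) + G u)"
    and gamma_pos: "\<gamma> > 0"
    and gamma_small: "\<gamma> < 1 / (12 * L)"
    and y_step: "\<And>t w.
        F (y (Suc t)) + (5 * L / 2) * (norm (y (Suc t)))\<^sup>2
          + (1 / (2 * \<gamma>)) * (norm (y (Suc t) - x t))\<^sup>2
        \<le> F w + (5 * L / 2) * (norm w)\<^sup>2 + (1 / (2 * \<gamma>)) * (norm (w - x t))\<^sup>2"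
    and z_step: "\<And>t w.
        G (z (Suc t)) - ereal ((5 * L / 2) * (norm (z (Suc t)))\<^sup>2)
          + ereal ((1 / (2 * \<gamma>)) * (norm (2 *\<^sub>R y (Suc t) - x t - z (Suc t)))\<^sup>2)
        \<le> G w - ereal ((5 * L / 2) * (norm w)\<^sup>2)
          + ereal ((1 / (2 * \<gamma>)) * (norm (2 *\<^sub>R y (Suc t) - x t - w))\<^sup>2)"
    and x_step: "\<And>t. x (Suc t) = x t + 2 *\<^sub>R (z (Suc t) - y (Suc t))"
begin

definition "c = 5 * L"
definition "r = \<gamma> * c"

lemma r_pos: "0 < r" and r_le: "r \<le> 5/12"
proof -
  show "0 < r" using L_pos gamma_pos by (simp add: r_def c_def)
  have "\<gamma> * (12 * L) < 1" using gamma_small L_pos by (simp add: field_simps)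
  then show "r \<le> 5/12" unfolding r_def c_def by (simp add: algebra_simps)
qed

lemma gradient_ineq: "F v \<ge> F u + gradF u \<bullet> (v - u)"
  by (rule grad_ineq[OF F_convex F_grad])

lemma descent: "F v \<le> F u + gradF u \<bullet> (v - u) + L * (norm (v - u))^2"
proof -
  have "F u \<ge> F v + gradF v \<bullet> (u - v)" by (rule gradient_ineq)
  moreover have "(gradF v - gradF u) \<bullet> (v - u) \<le> L * (norm (v - u))^2"
  proof -
    have "(gradF v - gradF u) \<bullet> (v - u) \<le> norm (gradF v - gradF u) * norm (v - u)"
      by (rule norm_cauchy_schwarz)
    also have "\<dots> \<le> L * norm (v - u) * norm (v - u)"
      by (intro mult_right_mono grad_Lip) auto
    finally show ?thesis by (simp add: power2_eq_square mult.assoc)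
  qed
  moreover have "gradF v \<bullet> (u - v) = - (gradF v \<bullet> (v - u))"
    by (simp add: inner_diff_right)
  ultimately show ?thesis by (simp add: inner_diff_left)
qed

lemma cocoercive_half:
  "F u - gradF u \<bullet> u \<le> F v - gradF u \<bullet> v - (norm (gradF v - gradF u))^2 / (4 * L)"
proof -
  define g where "g = gradF v - gradF u"
  define t where "t = 1 / (2 * L)"
  define w where "w = v - t *\<^sub>R g"
  have "F w \<ge> F u + gradF u \<bullet> (w - u)" by (rule gradient_ineq)
  moreover have "F w \<le> F v + gradF v \<bullet> (w - v) + L * (norm (w - v))^2" by (rule descent)
  moreover have "w - v = - (t *\<^sub>R g)" by (simp add: w_def)
  ultimately have "F u + gradF u \<bullet> (w - u) \<le> F v - t * (gradF v \<bullet> g) + L * t^2 * (g \<bullet> g)"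
    by (simp add: power2_norm_eq_inner power_mult_distrib)
  moreover have "gradF u \<bullet> (w - u) = gradF u \<bullet> v - t * (gradF u \<bullet> g) - gradF u \<bullet> u"
    by (simp add: w_def inner_diff_right)
  moreover have "t * (gradF v \<bullet> g) - t * (gradF u \<bullet> g) = t * (g \<bullet> g)"
    by (simp add: g_def inner_diff_left right_diff_distrib[symmetric])
  moreover have gg: "g \<bullet> g = (norm g)^2" by (simp add: power2_norm_eq_inner)
  moreover have "L * t^2 * (g \<bullet> g) = (norm g)^2 / (4 * L)"
    unfolding gg using L_pos by (simp add: t_def power2_eq_square)
  moreover have "t * (g \<bullet> g) = 2 * ((norm g)^2 / (4 * L))"
    unfolding gg using L_pos by (simp add: t_def)
  ultimately show ?thesis unfolding g_def[symmetric] by linarith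
qed

lemma cocoercive: "(gradF v - gradF u) \<bullet> (v - u) \<ge> (norm (gradF v - gradF u))^2 / (2 * L)"
proof -
  have 1: "F u - gradF u \<bullet> u \<le> F v - gradF u \<bullet> v - (norm (gradF v - gradF u))^2 / (4 * L)"
    by (rule cocoercive_half)
  have 2: "F v - gradF v \<bullet> v \<le> F u - gradF v \<bullet> u - (norm (gradF v - gradF u))^2 / (4 * L)"
    using cocoercive_half[of v u] by (simp add: norm_minus_commute)
  have "norm (gradF u - gradF v) = norm (gradF v - gradF u)" by (rule norm_minus_commute)
  moreover have "(gradF v - gradF u) \<bullet> (v - u) = gradF v \<bullet> v - gradF v \<bullet> u - gradF u \<bullet> v + gradF u \<bullet> u"
    by (simp add: inner_diff_left inner_diff_right)
  moreover have "(norm (gradF v - gradF u))^2 / (2 * L) = 2 * ((norm (gradF v - gradF u))^2 / (4 * L))"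
    by simp
  ultimately show ?thesis using 1 2 by linarith
qed

lemma c_pos: "c > 0" using L_pos by (simp add: c_def)

lemma y_opt: "x t = y (Suc t) + \<gamma> *\<^sub>R gradF (y (Suc t)) + r *\<^sub>R y (Suc t)"
proof -
  define Y where "Y = y (Suc t)"
  define X where "X = x t"
  define g where "g = gradF Y + c *\<^sub>R Y + (1/\<gamma>) *\<^sub>R (Y - X)"
  define K where "K = L + c/2 + 1/(2*\<gamma>)"
  have K: "K > 0"
  proof -
    have "1/(2*\<gamma>) > 0" using gamma_pos by simp
    then show ?thesis using L_pos c_pos unfolding K_def by linarith
  qed
  define s where "s = 1 / (2 * K)"
  have s: "s > 0" using K by (simp add: s_def)
  define n where "n = g \<bullet> g"
  define p1 where "p1 = gradF Y \<bullet> g"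
  define p2 where "p2 = Y \<bullet> g"
  define p3 where "p3 = (Y - X) \<bullet> g"
  have e1: "F (Y - s *\<^sub>R g) \<le> F Y - s * p1 + L * (s^2 * n)"
    using descent[of "Y - s *\<^sub>R g" Y]
    by (simp add: p1_def n_def power2_norm_eq_inner power_mult_distrib)
  have e2: "(norm (Y - s *\<^sub>R g))^2 = (norm Y)^2 - 2 * s * p2 + s^2*n"
    unfolding power2_norm_eq_inner p2_def n_def
    by (simp add: inner_diff_left inner_diff_right inner_commute algebra_simps power2_eq_square)
  have e3: "(norm (Y - s *\<^sub>R g - X))^2 = (norm (Y - X))^2 - 2 * s * p3 + s^2*n"
  proof -
    have "Y - s *\<^sub>R g - X = (Y - X) - s *\<^sub>R g" by simp
    then show ?thesis
      unfolding power2_norm_eq_inner p3_def n_def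
      by (simp only:) (simp add: inner_diff_left inner_diff_right inner_commute algebra_simps power2_eq_square)
  qed
  have e4: "n = p1 + c*p2 + (1/\<gamma>)*p3"
    by (simp add: n_def p1_def p2_def p3_def g_def inner_add_left)
  have yst: "F Y + (c/2) * (norm Y)^2 + (1/(2*\<gamma>)) * (norm (Y - X))^2
      \<le> F (Y - s *\<^sub>R g) + (c/2) * (norm (Y - s *\<^sub>R g))^2 + (1/(2*\<gamma>)) * (norm (Y - s *\<^sub>R g - X))^2"
    using y_step[of t "Y - s *\<^sub>R g"] by (simp add: Y_def X_def c_def)
  have e2': "(c/2) * (norm (Y - s *\<^sub>R g))^2 = (c/2) * (norm Y)^2 + (c/2)*(- 2 * s * p2 + s^2*n)"
    unfolding e2 by (simp add: algebra_simps)
  have e3': "(1/(2*\<gamma>)) * (norm (Y - s *\<^sub>R g - X))^2 = (1/(2*\<gamma>)) * (norm (Y - X))^2 + (1/(2*\<gamma>))*(- 2 * s * p3 + s^2*n)"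
    unfolding e3 by (simp add: algebra_simps)
  have id: "(- s * p1 + L*(s^2*n)) + (c/2)*(-2 * s * p2 + s^2*n) + (1/(2*\<gamma>))*(-2 * s * p3 + s^2*n) = - s * n/2"
  proof -
    have h: "s^2 * K = s / 2" using K by (simp add: s_def power2_eq_square)
    have "(- s * p1 + L*(s^2*n)) + (c/2)*(-2 * s * p2 + s^2*n) + (1/(2*\<gamma>))*(-2 * s * p3 + s^2*n)
        = - s * (p1 + c*p2 + (1/\<gamma>)*p3) + (s^2 * K) * n"
      by (simp add: K_def algebra_simps)
    also have "\<dots> = - s * n + (s / 2) * n" unfolding h e4 by simp
    also have "\<dots> = - s * n/2" by simp
    finally show ?thesis .
  qed
  have "s * n / 2 \<le> 0" using yst e1 e2' e3' id by linarith
  then have "n \<le> 0" using s by (simp add: zero_le_mult_iff mult_le_0_iff)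
  then have "g = 0" using inner_ge_zero[of g] by (simp add: n_def)
  then have "\<gamma> *\<^sub>R g = 0" by simp
  then have "\<gamma> *\<^sub>R gradF Y + r *\<^sub>R Y + (Y - X) = 0"
    using gamma_pos by (simp add: g_def r_def scaleR_add_right)
  then show ?thesis unfolding X_def Y_def[symmetric] by (simp add: algebra_simps eq_neg_iff_add_eq_0)
qed


lemma G_not_minf: "G u \<noteq> -\<infinity>"
  using G_proper by (simp add: proper_fun_def)

lemma G_some_fin: obtains x0 g0 where "G x0 = ereal g0"
proof -
  obtain x0 where "G x0 \<noteq> \<infinity>" using G_proper by (auto simp: proper_fun_def)
  with G_not_minf[of x0] that show ?thesis by (cases "G x0") auto
qed

lemma Gz_fin: obtains gz where "G (z (Suc t)) = ereal gz"
proof -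
  obtain x0 g0 where g0: "G x0 = ereal g0" by (rule G_some_fin)
  have st: "G (z (Suc t)) - ereal ((5 * L / 2) * (norm (z (Suc t)))\<^sup>2)
          + ereal ((1 / (2 * \<gamma>)) * (norm (2 *\<^sub>R y (Suc t) - x t - z (Suc t)))\<^sup>2)
        \<le> G x0 - ereal ((5 * L / 2) * (norm x0)\<^sup>2)
          + ereal ((1 / (2 * \<gamma>)) * (norm (2 *\<^sub>R y (Suc t) - x t - x0))\<^sup>2)"
    by (rule z_step)
  show ?thesis
  proof (cases "G (z (Suc t))")
    case (real gz) then show ?thesis by (rule that)
  next
    case PInf with st g0 show ?thesis by simp
  next
    case MInf with G_not_minf show ?thesis by simp
  qed
qed

lemma z_sub:
  assumes gz: "G (z (Suc t)) = ereal gz"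
  shows "ereal (gz + (1/\<gamma>) * ((2 *\<^sub>R y (Suc t) - x t - z (Suc t) + r *\<^sub>R z (Suc t)) \<bullet> (v - z (Suc t)))) \<le> G v"
proof (cases "G v")
  case PInf then show ?thesis by simp
next
  case MInf with G_not_minf show ?thesis by simp
next
  case (real gv)
  define Z where "Z = z (Suc t)"
  define DZ where "DZ = 2 *\<^sub>R y (Suc t) - x t - Z"
  define h where "h = v - Z"
  define P where "P = (DZ + r *\<^sub>R Z) \<bullet> h"
  have "gz + (1/\<gamma>) * P \<le> gv"
  proof (rule dir_lemma)
    show "(1/(2*\<gamma>)) * (h \<bullet> h) \<ge> 0" using gamma_pos by simp
    fix t' :: real assume t': "0 < t'" "t' \<le> 1"
    define w where "w = Z + t' *\<^sub>R h"
    have w_eq: "w = (1 - t') *\<^sub>R Z + t' *\<^sub>R v" by (simp add: w_def h_def algebra_simps)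
    have "G w \<le> ereal (1 - t') * G Z + ereal t' * G v"
      using G_convex t' unfolding convex_efun_def w_eq by auto
    also have "\<dots> = ereal ((1 - t') * gz + t' * gv)" using gz real by (simp add: Z_def)
    finally have Gw: "G w \<le> ereal ((1 - t') * gz + t' * gv)" .
    then obtain gw where gw: "G w = ereal gw" using G_not_minf[of w] by (cases "G w") auto
    have st: "G Z - ereal ((5 * L / 2) * (norm Z)\<^sup>2) + ereal ((1 / (2 * \<gamma>)) * (norm DZ)\<^sup>2)
        \<le> G w - ereal ((5 * L / 2) * (norm w)\<^sup>2)
          + ereal ((1 / (2 * \<gamma>)) * (norm (2 *\<^sub>R y (Suc t) - x t - w))\<^sup>2)"
      using z_step[of t w] by (simp add: Z_def DZ_def)
    have eqn: "2 *\<^sub>R y (Suc t) - x t - w = DZ - t' *\<^sub>R h" by (simp add: DZ_def w_def)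
    have st': "gz - (c/2) * (norm Z)^2 + (1/(2*\<gamma>)) * (norm DZ)^2
        \<le> gw - (c/2) * (norm (Z + t' *\<^sub>R h))^2 + (1/(2*\<gamma>)) * (norm (DZ - t' *\<^sub>R h))^2"
      using st[unfolded eqn] gz gw by (simp add: Z_def c_def w_def)
    have n1: "(norm (Z + t' *\<^sub>R h))^2 = (norm Z)^2 + 2 * t' * (Z \<bullet> h) + t'^2 * (h \<bullet> h)"
      unfolding power2_norm_eq_inner
      by (simp add: inner_add_left inner_add_right inner_commute algebra_simps power2_eq_square)
    have n2: "(norm (DZ - t' *\<^sub>R h))^2 = (norm DZ)^2 - 2 * t' * (DZ \<bullet> h) + t'^2 * (h \<bullet> h)"
      unfolding power2_norm_eq_inner
      by (simp add: inner_diff_left inner_diff_right inner_commute algebra_simps power2_eq_square)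
    have gwle: "gw \<le> (1 - t') * gz + t' * gv" using Gw gw by simp
    have P_eq: "P = \<gamma> * (c * (Z \<bullet> h)) + DZ \<bullet> h"
      by (simp add: P_def r_def inner_add_left)
    have "t' * (gz - gv) \<le> t' * (- (1/\<gamma>) * P + t' * ((1/(2*\<gamma>)) * (h \<bullet> h)))"
    proof -
      have "t' * (gz - gv) \<le> gz - gw" using gwle by (simp add: algebra_simps)
      also have "\<dots> \<le> (c/2) * ((norm Z)^2 - (norm (Z + t' *\<^sub>R h))^2)
                      + (1/(2*\<gamma>)) * ((norm (DZ - t' *\<^sub>R h))^2 - (norm DZ)^2)"
        using st' by (simp add: algebra_simps)
      also have "\<dots> = - t' * (c * (Z \<bullet> h) + (1/\<gamma>) * (DZ \<bullet> h)) - (c/2) * t'^2 * (h \<bullet> h)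
                    + t'^2 * ((1/(2*\<gamma>)) * (h \<bullet> h))"
        unfolding n1 n2 by (simp add: algebra_simps)
      also have "\<dots> \<le> - t' * (c * (Z \<bullet> h) + (1/\<gamma>) * (DZ \<bullet> h)) + t'^2 * ((1/(2*\<gamma>)) * (h \<bullet> h))"
        using c_pos by simp
      also have "\<dots> = t' * (- (1/\<gamma>) * P + t' * ((1/(2*\<gamma>)) * (h \<bullet> h)))"
        unfolding P_eq using gamma_pos by (simp add: field_simps power2_eq_square)
      finally show ?thesis .
    qed
    then have "gz - gv \<le> - (1/\<gamma>) * P + t' * ((1/(2*\<gamma>)) * (h \<bullet> h))"
      using t' by (simp add: mult_le_cancel_left_pos)
    then show "gz + (1/\<gamma>) * P \<le> gv + t' * ((1/(2*\<gamma>)) * (h \<bullet> h))" by simp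
  qed
  then show ?thesis using real by (simp add: P_def DZ_def Z_def h_def)
qed


lemma F_cont: "isCont F p"
  using has_derivative_continuous[OF F_grad[of p]] by (simp add: continuous_at)

lemma H_lsc:
  assumes "X \<longlonglongrightarrow> p"
  shows "ereal (F p) + G p \<le> liminf (\<lambda>k. ereal (F (X k)) + G (X k))"
proof -
  have "(\<lambda>k. ereal (F (X k))) \<longlonglongrightarrow> ereal (F p)"
    using isCont_tendsto_compose[OF F_cont assms] by (simp add: tendsto_ereal)
  then have "liminf (\<lambda>k. ereal (F (X k)) + G (X k)) = ereal (F p) + liminf (\<lambda>k. G (X k))"
    by (rule ereal_liminf_lim_add) simp
  moreover have "G p \<le> liminf (\<lambda>k. G (X k))" using G_lsc assms by (simp add: lsc_fun_def)
  ultimately show ?thesis by (simp add: add_left_mono)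
qed

lemma minimizer_exists: "\<exists>u. \<forall>v. ereal (F u) + G u \<le> ereal (F v) + G v"
proof -
  define H where "H = (\<lambda>u. ereal (F u) + G u)"
  obtain x0 g0 where g0: "G x0 = ereal g0" by (rule G_some_fin)
  obtain R where R: "\<And>x. norm x \<ge> R \<Longrightarrow> H x \<ge> ereal (F x0 + g0 + 1)"
    using coercive unfolding coercive_efun_def H_def by blast
  define S where "S = cball (0::'a) R"
  have x0S: "x0 \<in> S"
  proof (rule ccontr)
    assume "x0 \<notin> S"
    then have "norm x0 \<ge> R" by (simp add: S_def)
    from R[OF this] g0 show False by (simp add: H_def)
  qed
  have "H ` S \<noteq> {}" using x0S by auto
  from Inf_as_limit[OF this] obtain u where u: "\<And>n. u n \<in> H ` S" "u \<longlonglongrightarrow> Inf (H ` S)" by blast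
  have "\<forall>n. \<exists>X. X \<in> S \<and> H X = u n" using u(1) by (metis imageE)
  then obtain X where X: "\<And>n. X n \<in> S" "\<And>n. H (X n) = u n" by metis
  have "seq_compact S" unfolding S_def by (rule compact_imp_seq_compact) simp
  from seq_compactE[OF this] X(1) obtain p \<rho> where p: "p \<in> S" "strict_mono \<rho>" "(X \<circ> \<rho>) \<longlonglongrightarrow> p"
    by blast
  have "H p \<le> liminf (\<lambda>k. H ((X \<circ> \<rho>) k))"
    using H_lsc[OF p(3)] by (simp add: H_def)
  also have "(\<lambda>k. H ((X \<circ> \<rho>) k)) = u \<circ> \<rho>" using X(2) by (auto simp: fun_eq_iff)
  also have "liminf (u \<circ> \<rho>) = Inf (H ` S)"
    by (rule lim_imp_Liminf) (auto intro: LIMSEQ_subseq_LIMSEQ[OF u(2) p(2)])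
  finally have pmin: "H p \<le> Inf (H ` S)" .
  have "H p \<le> H v" for v
  proof (cases "v \<in> S")
    case True then show ?thesis using pmin by (meson INF_lower order_trans)
  next
    case False
    then have "norm v \<ge> R" by (simp add: S_def)
    then have "H v \<ge> ereal (F x0 + g0 + 1)" by (rule R)
    moreover have "H x0 = ereal (F x0 + g0)" using g0 by (simp add: H_def)
    moreover have "H p \<le> H x0" using pmin x0S by (meson INF_lower order_trans)
    ultimately show ?thesis by (smt (verit) ereal_less_eq(3) order_trans)
  qed
  then show ?thesis unfolding H_def by blast
qed

lemma min_sub:
  assumes min: "\<And>v. ereal (F u) + G u \<le> ereal (F v) + G v" and gu: "G u = ereal gu"
  shows "ereal (gu - gradF u \<bullet> (v - u)) \<le> G v"
proof (cases "G v")
  case PInf then show ?thesis by simp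
next
  case MInf with G_not_minf show ?thesis by simp
next
  case (real gv)
  define h where "h = v - u"
  have "gu - gradF u \<bullet> h \<le> gv"
  proof (rule dir_lemma)
    show "L * (h \<bullet> h) \<ge> 0" using L_pos by simp
    fix t :: real assume t: "0 < t" "t \<le> 1"
    define w where "w = u + t *\<^sub>R h"
    have w_eq: "w = (1 - t) *\<^sub>R u + t *\<^sub>R v" by (simp add: w_def h_def algebra_simps)
    have "G w \<le> ereal (1 - t) * G u + ereal t * G v"
      using G_convex t unfolding convex_efun_def w_eq by auto
    also have "\<dots> = ereal ((1 - t) * gu + t * gv)" using gu real by simp
    finally have Gw: "G w \<le> ereal ((1 - t) * gu + t * gv)" .
    then obtain gw where gw: "G w = ereal gw" using G_not_minf[of w] by (cases "G w") auto
    have gwle: "gw \<le> (1 - t) * gu + t * gv" using Gw gw by simp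
    have "F u + gu \<le> F w + gw" using min[of w] gu gw by simp
    moreover have "F w \<le> F u + gradF u \<bullet> (w - u) + L * (norm (w - u))^2" by (rule descent)
    moreover have "gradF u \<bullet> (w - u) = t * (gradF u \<bullet> h)" by (simp add: w_def)
    moreover have "L * (norm (w - u))^2 = t * (t * (L * (h \<bullet> h)))"
      unfolding power2_norm_eq_inner by (simp add: w_def algebra_simps)
    ultimately have "t * gu \<le> t * (gradF u \<bullet> h + gv + t * (L * (h \<bullet> h)))"
      using gwle by (simp add: algebra_simps)
    then have "gu \<le> gradF u \<bullet> h + gv + t * (L * (h \<bullet> h))"
      using t by (simp add: mult_le_cancel_left_pos)
    then show "gu - gradF u \<bullet> h \<le> gv + t * (L * (h \<bullet> h))" by simp
  qed
  then show ?thesis using real by (simp add: h_def)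
qed


lemma step_ineq:
  assumes min: "\<And>v. ereal (F u) + G u \<le> ereal (F v) + G v" and gu: "G u = ereal gu"
    and gz: "G (z (Suc t)) = ereal gz"
  shows "\<gamma> * (F (z (Suc t)) + gz - F u - gu) + ((5 - 7*r)/10) * (norm (y (Suc t) - z (Suc t)))^2
    \<le> ((1-r)/(8*r)) * ((norm (x t - (u + \<gamma> *\<^sub>R gradF u + r *\<^sub>R u)))^2
                      - (norm (x (Suc t) - (u + \<gamma> *\<^sub>R gradF u + r *\<^sub>R u)))^2)"
proof -
  define Y where "Y = y (Suc t)"
  define Z where "Z = z (Suc t)"
  define X where "X = x t"
  define xs where "xs = u + \<gamma> *\<^sub>R gradF u + r *\<^sub>R u"
  define a where "a = Y - u"
  define b where "b = Z - u"
  define e where "e = \<gamma> *\<^sub>R (gradF Y - gradF u)"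
  define S where "S = 2 *\<^sub>R Y - X - Z + r *\<^sub>R Z"
  have X_eq: "X = Y + \<gamma> *\<^sub>R gradF Y + r *\<^sub>R Y" unfolding X_def Y_def by (rule y_opt)
  have hX: "X - xs = (1 + r) *\<^sub>R a + e"
    by (simp add: X_eq xs_def a_def e_def algebra_simps)
  have hX1: "x (Suc t) - xs = (1 + r) *\<^sub>R a + e + 2 *\<^sub>R (b - a)"
    using hX by (simp add: x_step X_def[symmetric] Y_def[symmetric] Z_def[symmetric] a_def b_def algebra_simps)
  have S_eq: "S = (1 - r) *\<^sub>R (a - b) - \<gamma> *\<^sub>R gradF Y"
    by (simp add: S_def X_eq a_def b_def algebra_simps scaleR_2)
  have zs: "gz + (1/\<gamma>) * (S \<bullet> (u - Z)) \<le> gu"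
    using z_sub[OF gz, of u] gu by (simp add: S_def Z_def X_def Y_def)
  have us: "gu - gradF u \<bullet> (Z - u) \<le> gz"
    using min_sub[OF min gu, of Z] gz by (simp add: Z_def)
  have Sb: "(1/\<gamma>) * (S \<bullet> (u - Z)) = - ((1/\<gamma>) * (S \<bullet> b))"
    by (simp add: b_def inner_diff_right diff_divide_distrib)
  have "(1/\<gamma>) * (S \<bullet> b) + gradF u \<bullet> b \<ge> 0"
    using zs us Sb by (simp add: b_def)
  then have "\<gamma> * ((1/\<gamma>) * (S \<bullet> b) + gradF u \<bullet> b) \<ge> 0" using gamma_pos by simp
  then have "(S + \<gamma> *\<^sub>R gradF u) \<bullet> b \<ge> 0" using gamma_pos by (simp add: inner_add_left algebra_simps)
  moreover have "S + \<gamma> *\<^sub>R gradF u = (1 - r) *\<^sub>R (a - b) - e"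
    by (simp add: S_eq e_def algebra_simps)
  ultimately have m: "((1 - r) *\<^sub>R (a - b) - e) \<bullet> b \<ge> 0" by simp
  have co: "(gradF Y - gradF u) \<bullet> a \<ge> (norm (gradF Y - gradF u))^2 / (2 * L)"
    using cocoercive[of Y u] by (simp add: a_def)
  have C: "e \<bullet> a \<ge> (5/(2*r)) * (e \<bullet> e)"
  proof -
    have ee: "e \<bullet> e = \<gamma>^2 * (norm (gradF Y - gradF u))^2"
      unfolding e_def inner_scaleR_left inner_scaleR_right power2_norm_eq_inner
      by (simp add: power2_eq_square)
    have "(5/(2*r)) * (e \<bullet> e) = \<gamma> * ((norm (gradF Y - gradF u))^2 / (2 * L))"
      unfolding ee using gamma_pos L_pos by (simp add: r_def c_def field_simps power2_eq_square)
    also have "\<dots> \<le> \<gamma> * ((gradF Y - gradF u) \<bullet> a)" using co gamma_pos by (intro mult_left_mono) auto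
    also have "\<dots> = e \<bullet> a" by (simp add: e_def)
    finally show ?thesis .
  qed
  have f1: "F u \<ge> F Y + gradF Y \<bullet> (u - Y)" by (rule gradient_ineq)
  have f2: "F Z \<le> F Y + gradF Y \<bullet> (Z - Y) + L * (norm (Z - Y))^2" by (rule descent)
  have "F Z + gz - F u - gu \<le> gradF Y \<bullet> b + (1/\<gamma>) * (S \<bullet> b) + L * (norm (Z - Y))^2"
  proof -
    have "gradF Y \<bullet> (Z - Y) - gradF Y \<bullet> (u - Y) = gradF Y \<bullet> b"
      by (simp add: b_def inner_diff_right diff_divide_distrib)
    then show ?thesis using f1 f2 zs Sb by linarith
  qed
  then have "\<gamma> * (F Z + gz - F u - gu) \<le> \<gamma> * (gradF Y \<bullet> b + (1/\<gamma>) * (S \<bullet> b) + L * (norm (Z - Y))^2)"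
    using gamma_pos by (simp add: mult_left_mono)
  also have "\<dots> = (\<gamma> *\<^sub>R gradF Y + S) \<bullet> b + (\<gamma> * L) * (norm (Z - Y))^2"
    using gamma_pos by (simp add: inner_add_left algebra_simps)
  also have "\<gamma> *\<^sub>R gradF Y + S = (1 - r) *\<^sub>R (a - b)" by (simp add: S_eq)
  also have "\<gamma> * L = r / 5" by (simp add: r_def c_def)
  also have "(norm (Z - Y))^2 = (a - b) \<bullet> (a - b)"
    by (simp add: a_def b_def power2_norm_eq_inner[symmetric] norm_minus_commute)
  finally have phi: "\<gamma> * (F Z + gz - F u - gu) \<le> (1 - r) * ((a - b) \<bullet> b) + (r/5) * ((a - b) \<bullet> (a - b))"
    by simp
  have "\<gamma> * (F Z + gz - F u - gu) + ((5 - 7*r)/10) * (norm (a - b))^2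
      \<le> ((1-r)/(8*r)) * ((norm ((1+r) *\<^sub>R a + e))^2 - (norm ((1+r) *\<^sub>R a + e + 2 *\<^sub>R (b - a)))^2)"
    by (rule key_vec[OF r_pos r_le m C phi])
  moreover have "a - b = Y - Z" by (simp add: a_def b_def)
  moreover have n1: "norm ((1+r) *\<^sub>R a + e + 2 *\<^sub>R (b - a)) = norm (x (Suc t) - xs)" using hX1 by simp
  moreover have n2: "norm ((1+r) *\<^sub>R a + e) = norm (X - xs)" using hX by simp
  ultimately show ?thesis by (simp add: X_def Y_def Z_def xs_def)
qed


definition "gz t = real_of_ereal (G (z t))"

lemma Gz_eq: "G (z (Suc t)) = ereal (gz (Suc t))"
proof -
  obtain g where "G (z (Suc t)) = ereal g" by (rule Gz_fin)
  then show ?thesis by (simp add: gz_def)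
qed

lemma kappa_pos: "(5 - 7*r)/10 > 0" using r_le by simp

lemma fejer:
  assumes min: "\<And>v. ereal (F u) + G u \<le> ereal (F v) + G v" and gu: "G u = ereal gu"
  shows "(norm (x (Suc t) - x t))^2
     \<le> (4 * ((1-r)/(8*r)) / ((5 - 7*r)/10)) * ((norm (x t - (u + \<gamma> *\<^sub>R gradF u + r *\<^sub>R u)))^2
                      - (norm (x (Suc t) - (u + \<gamma> *\<^sub>R gradF u + r *\<^sub>R u)))^2)"
proof -
  define D where "D = ((norm (x t - (u + \<gamma> *\<^sub>R gradF u + r *\<^sub>R u)))^2
                      - (norm (x (Suc t) - (u + \<gamma> *\<^sub>R gradF u + r *\<^sub>R u)))^2)"
  define \<kappa> where "\<kappa> = (5 - 7*r)/10"
  have k: "\<kappa> > 0" using kappa_pos by (simp add: \<kappa>_def)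
  have st: "\<gamma> * (F (z (Suc t)) + gz (Suc t) - F u - gu) + \<kappa> * (norm (y (Suc t) - z (Suc t)))^2
    \<le> ((1-r)/(8*r)) * D"
    using step_ineq[OF min gu Gz_eq] by (simp add: D_def \<kappa>_def)
  have "F u + gu \<le> F (z (Suc t)) + gz (Suc t)" using min[of "z (Suc t)"] gu Gz_eq[of t] by simp
  then have "\<gamma> * (F (z (Suc t)) + gz (Suc t) - F u - gu) \<ge> 0" using gamma_pos by simp
  with st have kk: "\<kappa> * (norm (y (Suc t) - z (Suc t)))^2 \<le> ((1-r)/(8*r)) * D" by linarith
  have "(norm (y (Suc t) - z (Suc t)))^2 \<le> ((1-r)/(8*r)) * D / \<kappa>"
    using divide_right_mono[OF kk, of \<kappa>] k by simp
  moreover have "(norm (x (Suc t) - x t))^2 = 4 * (norm (y (Suc t) - z (Suc t)))^2"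
  proof -
    have "x (Suc t) - x t = 2 *\<^sub>R (z (Suc t) - y (Suc t))" by (simp add: x_step)
    then have "norm (x (Suc t) - x t) = 2 * norm (y (Suc t) - z (Suc t))"
      by (simp add: norm_minus_commute)
    then show ?thesis by (simp add: power2_eq_square)
  qed
  ultimately have "(norm (x (Suc t) - x t))^2 \<le> 4 * (((1-r)/(8*r)) * D / \<kappa>)" by linarith
  moreover have "4 * ((1-r)/(8*r)) / \<kappa> * D = 4 * (((1-r)/(8*r)) * D / \<kappa>)" by (simp add: field_simps)
  ultimately show ?thesis unfolding D_def[symmetric] \<kappa>_def[symmetric] by linarith
qed

lemma summable_dx: "summable (\<lambda>t. (norm (x (Suc t) - x t))^2)"
proof -
  obtain u where min: "\<And>v. ereal (F u) + G u \<le> ereal (F v) + G v" using minimizer_exists by blast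
  obtain x0 g0 where g0: "G x0 = ereal g0" by (rule G_some_fin)
  have "G u \<noteq> \<infinity>"
  proof
    assume "G u = \<infinity>" then show False using min[of x0] g0 by simp
  qed
  then obtain gu where gu: "G u = ereal gu" using G_not_minf[of u] by (cases "G u") auto
  define xs where "xs = u + \<gamma> *\<^sub>R gradF u + r *\<^sub>R u"
  define K where "K = 4 * ((1-r)/(8*r)) / ((5 - 7*r)/10)"
  have K: "K \<ge> 0" using r_pos r_le by (simp add: K_def)
  have f: "(norm (x (Suc t) - x t))^2 \<le> K * ((norm (x t - xs))^2 - (norm (x (Suc t) - xs))^2)" for t
    using fejer[OF min gu] by (simp add: K_def xs_def)
  show ?thesis
  proof (rule summableI_nonneg_bounded)
    fix n
    have "(\<Sum>t<n. (norm (x (Suc t) - x t))^2) \<le> (\<Sum>t<n. K * ((norm (x t - xs))^2 - (norm (x (Suc t) - xs))^2))"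
      by (intro sum_mono f)
    also have "\<dots> = K * ((norm (x 0 - xs))^2 - (norm (x n - xs))^2)"
      using sum_lessThan_telescope'[of "\<lambda>t. (norm (x t - xs))^2" n] by (simp add: sum_distrib_left[symmetric])
    also have "\<dots> \<le> K * (norm (x 0 - xs))^2" using K by (simp add: mult_left_mono)
    finally show "(\<Sum>t<n. (norm (x (Suc t) - x t))^2) \<le> K * (norm (x 0 - xs))^2" .
  qed simp
qed

lemma dx_zero: "(\<lambda>t. x (Suc t) - x t) \<longlonglongrightarrow> 0"
proof -
  have "(\<lambda>t. (norm (x (Suc t) - x t))^2) \<longlonglongrightarrow> 0" by (rule summable_LIMSEQ_zero[OF summable_dx])
  then have "(\<lambda>t. sqrt ((norm (x (Suc t) - x t))^2)) \<longlonglongrightarrow> sqrt 0"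
    by (intro tendsto_intros)
  then have "(\<lambda>t. norm (x (Suc t) - x t)) \<longlonglongrightarrow> 0" by simp
  then show ?thesis by (simp add: tendsto_norm_zero_iff)
qed


lemma grad_tendsto:
  assumes "X \<longlonglongrightarrow> p"
  shows "(\<lambda>k. gradF (X k)) \<longlonglongrightarrow> gradF p"
proof -
  have "(\<lambda>k. X k - p) \<longlonglongrightarrow> 0" using assms by (simp add: LIM_zero)
  then have "(\<lambda>k. L * norm (X k - p)) \<longlonglongrightarrow> L * 0"
    by (intro tendsto_intros) (simp add: tendsto_norm_zero)
  then have g0: "(\<lambda>k. L * norm (X k - p)) \<longlonglongrightarrow> 0" by simp
  have "(\<lambda>k. gradF (X k) - gradF p) \<longlonglongrightarrow> 0"
    by (rule Lim_null_comparison[OF _ g0]) (simp add: grad_Lip always_eventually)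
  then show ?thesis by (rule LIM_zero_cancel)
qed

lemma cluster_props:
  assumes sm: "strict_mono \<rho>"
    and lim: "((\<lambda>k. (y (\<rho> k), z (\<rho> k), x (\<rho> k))) \<longlongrightarrow> (yb, zb, xb)) sequentially"
  shows "yb = zb" "\<And>u. ereal (F zb) + G zb \<le> ereal (F u) + G u"
    "xb = zb + \<gamma> *\<^sub>R gradF zb + r *\<^sub>R zb"
proof -
  have ly: "(\<lambda>k. y (\<rho> k)) \<longlonglongrightarrow> yb" using tendsto_fst[OF lim] by simp
  have lz: "(\<lambda>k. z (\<rho> k)) \<longlonglongrightarrow> zb" using tendsto_fst[OF tendsto_snd[OF lim]] by simp
  have lx: "(\<lambda>k. x (\<rho> k)) \<longlonglongrightarrow> xb" using tendsto_snd[OF tendsto_snd[OF lim]] by simp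
  define m where "m k = \<rho> (Suc k) - 1" for k
  have Sm: "Suc (m k) = \<rho> (Suc k)" for k
    using seq_suble[OF sm, of "Suc k"] by (simp add: m_def)
  have smm: "strict_mono m"
  proof (rule strict_monoI)
    fix a b :: nat assume "a < b"
    then have "\<rho> (Suc a) < \<rho> (Suc b)" using sm by (simp add: strict_mono_def)
    then show "m a < m b" using Sm[of a] Sm[of b] by simp
  qed
  define Y where "Y k = y (Suc (m k))" for k
  define Z where "Z k = z (Suc (m k))" for k
  define X where "X k = x (Suc (m k))" for k
  have lY: "Y \<longlonglongrightarrow> yb" unfolding Y_def Sm using LIMSEQ_Suc[OF ly] .
  have lZ: "Z \<longlonglongrightarrow> zb" unfolding Z_def Sm using LIMSEQ_Suc[OF lz] .
  have lX: "X \<longlonglongrightarrow> xb" unfolding X_def Sm using LIMSEQ_Suc[OF lx] .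
  have ld: "(\<lambda>k. x (Suc (m k)) - x (m k)) \<longlonglongrightarrow> 0"
    using LIMSEQ_subseq_LIMSEQ[OF dx_zero smm] by (simp add: o_def)
  have dZY: "x (Suc (m k)) - x (m k) = 2 *\<^sub>R (Z k - Y k)" for k
    by (simp add: x_step Z_def Y_def)
  have "(\<lambda>k. (1/2) *\<^sub>R (x (Suc (m k)) - x (m k))) \<longlonglongrightarrow> (1/2) *\<^sub>R 0"
    by (intro tendsto_intros ld)
  then have "(\<lambda>k. Z k - Y k) \<longlonglongrightarrow> 0" unfolding dZY by simp
  moreover have "(\<lambda>k. Z k - Y k) \<longlonglongrightarrow> zb - yb" by (intro tendsto_intros lZ lY)
  ultimately have "zb - yb = 0" using LIMSEQ_unique by blast
  then show yz: "yb = zb" by simp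
  have "(\<lambda>k. X k - (x (Suc (m k)) - x (m k))) \<longlonglongrightarrow> xb - 0" by (intro tendsto_intros lX ld)
  then have l1: "(\<lambda>k. x (m k)) \<longlonglongrightarrow> xb" by (simp add: X_def)
  have "(\<lambda>k. Y k + \<gamma> *\<^sub>R gradF (Y k) + r *\<^sub>R Y k) \<longlonglongrightarrow> yb + \<gamma> *\<^sub>R gradF yb + r *\<^sub>R yb"
    by (intro tendsto_intros lY grad_tendsto)
  moreover have "x (m k) = Y k + \<gamma> *\<^sub>R gradF (Y k) + r *\<^sub>R Y k" for k
    unfolding Y_def by (rule y_opt)
  ultimately have "(\<lambda>k. x (m k)) \<longlonglongrightarrow> yb + \<gamma> *\<^sub>R gradF yb + r *\<^sub>R yb" by simp
  with l1 have xb_eq: "xb = yb + \<gamma> *\<^sub>R gradF yb + r *\<^sub>R yb" using LIMSEQ_unique by blast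
  then show xb_eq': "xb = zb + \<gamma> *\<^sub>R gradF zb + r *\<^sub>R zb" using yz by simp
  have sub: "G zb \<le> ereal (gv + gradF zb \<bullet> (v - zb))" if gv: "G v = ereal gv" for v gv
  proof -
    define q where "q k = (1/\<gamma>) * ((2 *\<^sub>R Y k - x (m k) - Z k + r *\<^sub>R Z k) \<bullet> (v - Z k))" for k
    have lq: "q \<longlonglongrightarrow> (1/\<gamma>) * ((2 *\<^sub>R yb - xb - zb + r *\<^sub>R zb) \<bullet> (v - zb))"
      unfolding q_def by (intro tendsto_intros lY lZ l1)
    have "(1/\<gamma>) * ((2 *\<^sub>R yb - xb - zb + r *\<^sub>R zb) \<bullet> (v - zb)) = - (gradF zb \<bullet> (v - zb))"
    proof -
      have "2 *\<^sub>R yb - xb - zb + r *\<^sub>R zb = - (\<gamma> *\<^sub>R gradF zb)"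
        using xb_eq' yz by (simp add: algebra_simps scaleR_2)
      then show ?thesis using gamma_pos by simp
    qed
    with lq have lq': "q \<longlonglongrightarrow> - (gradF zb \<bullet> (v - zb))" by simp
    have le: "ereal (gz (Suc (m k))) \<le> ereal (gv - q k)" for k
    proof -
      have "ereal (gz (Suc (m k)) + q k) \<le> G v"
        using z_sub[OF Gz_eq[of "m k"], of v] by (simp add: q_def Y_def Z_def)
      then show ?thesis using gv by simp
    qed
    have "G zb \<le> liminf (\<lambda>k. G (Z k))" using G_lsc lZ by (simp add: lsc_fun_def)
    also have "(\<lambda>k. G (Z k)) = (\<lambda>k. ereal (gz (Suc (m k))))" by (simp add: Z_def Gz_eq)
    also have "liminf (\<lambda>k. ereal (gz (Suc (m k)))) \<le> liminf (\<lambda>k. ereal (gv - q k))"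
      using le by (intro Liminf_mono always_eventually allI) simp
    also have "liminf (\<lambda>k. ereal (gv - q k)) = ereal (gv - - (gradF zb \<bullet> (v - zb)))"
    proof (rule lim_imp_Liminf)
      show "(\<lambda>k. ereal (gv - q k)) \<longlonglongrightarrow> ereal (gv - - (gradF zb \<bullet> (v - zb)))"
        unfolding lim_ereal by (intro tendsto_diff tendsto_const lq')
    qed simp
    finally show ?thesis by simp
  qed
  show "ereal (F zb) + G zb \<le> ereal (F u) + G u" for u
  proof (cases "G u")
    case PInf then show ?thesis by simp
  next
    case MInf with G_not_minf show ?thesis by simp
  next
    case (real gv)
    have "F zb \<le> F u - gradF zb \<bullet> (u - zb)" using gradient_ineq[of zb u] by simp
    then have "ereal (F zb) + G zb \<le> ereal (F u - gradF zb \<bullet> (u - zb)) + ereal (gv + gradF zb \<bullet> (u - zb))"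
      using sub[OF real] by (intro add_mono) auto
    also have "\<dots> = ereal (F u) + G u" using real by simp
    finally show ?thesis .
  qed
qed


lemma G_avg: "G ((1 / real (Suc n)) *\<^sub>R (\<Sum>t = 1..Suc n. z t)) \<le> ereal ((\<Sum>t = 1..Suc n. gz t) / real (Suc n))"
proof (induction n)
  case 0
  then show ?case using Gz_eq[of 0] by simp
next
  case (Suc n)
  define \<tau> where "\<tau> = 1 / real (Suc (Suc n))"
  have \<tau>: "0 \<le> \<tau>" "\<tau> \<le> 1" by (auto simp: \<tau>_def)
  define An where "An = (1 / real (Suc n)) *\<^sub>R (\<Sum>t = 1..Suc n. z t)"
  define Bn where "Bn = (\<Sum>t = 1..Suc n. gz t) / real (Suc n)"
  have eqA: "(1 / real (Suc (Suc n))) *\<^sub>R (\<Sum>t = 1..Suc (Suc n). z t) = (1 - \<tau>) *\<^sub>R An + \<tau> *\<^sub>R z (Suc (Suc n))"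
  proof -
    have "1 - \<tau> = real (Suc n) / real (Suc (Suc n))" by (simp add: \<tau>_def field_simps)
    then have "(1 - \<tau>) *\<^sub>R An = (1 / real (Suc (Suc n))) *\<^sub>R (\<Sum>t = 1..Suc n. z t)"
      by (simp add: An_def)
    then show ?thesis by (simp add: \<tau>_def scaleR_right_distrib)
  qed
  have eqB: "(\<Sum>t = 1..Suc (Suc n). gz t) / real (Suc (Suc n)) = (1 - \<tau>) * Bn + \<tau> * gz (Suc (Suc n))"
  proof -
    have h1: "1 - \<tau> = real (Suc n) / real (Suc (Suc n))" by (simp add: \<tau>_def field_simps)
    have "(1 - \<tau>) * Bn = (\<Sum>t = 1..Suc n. gz t) / real (Suc (Suc n))"
      unfolding h1 Bn_def by (simp del: of_nat_Suc)
    then show ?thesis by (simp add: \<tau>_def add_divide_distrib)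
  qed
  have "G ((1 - \<tau>) *\<^sub>R An + \<tau> *\<^sub>R z (Suc (Suc n))) \<le> ereal (1 - \<tau>) * G An + ereal \<tau> * G (z (Suc (Suc n)))"
    using G_convex \<tau> unfolding convex_efun_def by blast
  also have "\<dots> \<le> ereal (1 - \<tau>) * ereal Bn + ereal \<tau> * ereal (gz (Suc (Suc n)))"
    using Suc.IH \<tau> Gz_eq[of "Suc n"] unfolding An_def Bn_def
    by (intro add_mono ereal_mult_left_mono) auto
  also have "\<dots> = ereal ((1 - \<tau>) * Bn + \<tau> * gz (Suc (Suc n)))" by simp
  finally show ?case unfolding eqA eqB .
qed

lemma rate:
  assumes min: "\<And>v. ereal (F zb) + G zb \<le> ereal (F v) + G v"
    and xb_eq: "xb = zb + \<gamma> *\<^sub>R gradF zb + r *\<^sub>R zb"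
    and N: "N \<ge> 1"
  shows "ereal (F ((1 / real N) *\<^sub>R (\<Sum>t = 1..N. z t))) + G ((1 / real N) *\<^sub>R (\<Sum>t = 1..N. z t))
           - ereal (F zb) - G zb
         \<le> ereal (1 / (40 * \<gamma> * real N * L) * (1 / \<gamma> - 5 * L) * (norm (x 0 - xb))\<^sup>2)"
proof -
  obtain x0 g0 where g0: "G x0 = ereal g0" by (rule G_some_fin)
  have "G zb \<noteq> \<infinity>"
  proof
    assume "G zb = \<infinity>" then show False using min[of x0] g0 by simp
  qed
  then obtain gu where gu: "G zb = ereal gu" using G_not_minf[of zb] by (cases "G zb") auto
  define k where "k = (1-r)/(8*r)"
  define \<phi> where "\<phi> t = F (z (Suc t)) + gz (Suc t) - F zb - gu" for t
  have st: "\<gamma> * \<phi> t \<le> k * ((norm (x t - xb))^2 - (norm (x (Suc t) - xb))^2)" for t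
  proof -
    have "\<gamma> * \<phi> t + ((5 - 7*r)/10) * (norm (y (Suc t) - z (Suc t)))^2
      \<le> k * ((norm (x t - xb))^2 - (norm (x (Suc t) - xb))^2)"
      using step_ineq[OF min gu Gz_eq] by (simp add: \<phi>_def k_def xb_eq)
    moreover have "((5 - 7*r)/10) * (norm (y (Suc t) - z (Suc t)))^2 \<ge> 0"
      using kappa_pos by simp
    ultimately show ?thesis by linarith
  qed
  have k: "k \<ge> 0" using r_pos r_le by (simp add: k_def)
  have "\<gamma> * (\<Sum>t<N. \<phi> t) = (\<Sum>t<N. \<gamma> * \<phi> t)" by (simp add: sum_distrib_left)
  also have "\<dots> \<le> (\<Sum>t<N. k * ((norm (x t - xb))^2 - (norm (x (Suc t) - xb))^2))"
    by (intro sum_mono st)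
  also have "\<dots> = k * ((norm (x 0 - xb))^2 - (norm (x N - xb))^2)"
    using sum_lessThan_telescope'[of "\<lambda>t. (norm (x t - xb))^2" N] by (simp add: sum_distrib_left[symmetric])
  also have "\<dots> \<le> k * (norm (x 0 - xb))^2" using k by (simp add: mult_left_mono)
  finally have sumphi: "\<gamma> * (\<Sum>t<N. \<phi> t) \<le> k * (norm (x 0 - xb))^2" .
  obtain n where n: "N = Suc n" using N by (cases N) auto
  define zN where "zN = (1 / real N) *\<^sub>R (\<Sum>t = 1..N. z t)"
  have GzN: "G zN \<le> ereal ((\<Sum>t = 1..N. gz t) / real N)"
    unfolding zN_def n by (rule G_avg)
  then obtain gN where gN: "G zN = ereal gN" using G_not_minf[of zN] by (cases "G zN") auto
  have gNle: "gN \<le> (\<Sum>t = 1..N. gz t) / real N" using GzN gN by simp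
  have FzN: "F zN \<le> (\<Sum>t = 1..N. (1 / real N) * F (z t))"
  proof -
    have "F (\<Sum>t = 1..N. (1 / real N) *\<^sub>R z t) \<le> (\<Sum>t = 1..N. (1 / real N) * F (z t))"
      using N by (intro convex_on_sum[OF _ _ F_convex]) auto
    then show ?thesis by (simp add: zN_def scaleR_sum_right)
  qed
  have "F zN + gN - F zb - gu \<le> (\<Sum>t = 1..N. F (z t) + gz t) / real N - F zb - gu"
    using FzN gNle by (simp add: sum_divide_distrib[symmetric] sum.distrib add_divide_distrib)
  also have "(\<Sum>t = 1..N. F (z t) + gz t) = (\<Sum>t<N. F (z (Suc t)) + gz (Suc t))"
    by (simp add: sum.atLeast1_atMost_eq)
  also have "(\<Sum>t<N. F (z (Suc t)) + gz (Suc t)) / real N - F zb - gu = (\<Sum>t<N. \<phi> t) / real N"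
    using N by (simp add: \<phi>_def sum_subtractf field_simps)
  also have "\<dots> \<le> (k * (norm (x 0 - xb))^2 / \<gamma>) / real N"
    using sumphi gamma_pos N by (intro divide_right_mono) (auto simp: field_simps)
  also have "\<dots> = 1 / (40 * \<gamma> * real N * L) * (1 / \<gamma> - 5 * L) * (norm (x 0 - xb))\<^sup>2"
    using gamma_pos L_pos N by (simp add: k_def r_def c_def field_simps)
  finally have real_ineq: "F zN + gN - F zb - gu \<le> 1 / (40 * \<gamma> * real N * L) * (1 / \<gamma> - 5 * L) * (norm (x 0 - xb))\<^sup>2" .
  show ?thesis unfolding zN_def[symmetric] using real_ineq gN gu by simp
qed

end


lemma min_o:
  fixes a :: "nat \<Rightarrow> real"
  assumes nn: "\<And>t. a t \<ge> 0" and sm: "summable (\<lambda>t. (a t)^2)"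
  shows "(\<lambda>N. Min (a ` {0..N})) \<in> o(\<lambda>N. 1 / sqrt (real N))"
proof (rule landau_o.smallI)
  fix \<epsilon> :: real assume e: "\<epsilon> > 0"
  then have "\<epsilon>^2/2 > 0" by simp
  with sm obtain M where M: "\<And>m n. m \<ge> M \<Longrightarrow> norm (\<Sum>t = m..<n. (a t)^2) < \<epsilon>^2/2"
    unfolding summable_Cauchy by blast
  show "eventually (\<lambda>N. norm (Min (a ` {0..N})) \<le> \<epsilon> * norm (1 / sqrt (real N))) sequentially"
    unfolding eventually_sequentially
  proof (intro exI[of _ "max (2*M) 1"] allI impI)
    fix N :: nat assume NM: "max (2*M) 1 \<le> N"
    define f where "f = Min (a ` {0..N})"
    define m where "m = N div 2"
    have mM: "m \<ge> M" using NM unfolding m_def by linarith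
    have f0: "f \<ge> 0" unfolding f_def using nn by (subst Min_ge_iff) auto
    have fle: "f \<le> a t" if "t \<le> N" for t unfolding f_def using that by (intro Min_le) auto
    have "(\<Sum>t = m..<Suc N. f^2) \<le> (\<Sum>t = m..<Suc N. (a t)^2)"
    proof (intro sum_mono power_mono)
      fix t assume "t \<in> {m..<Suc N}"
      then show "f \<le> a t" by (intro fle) auto
    qed (use f0 in auto)
    also have "\<dots> < \<epsilon>^2/2"
    proof -
      have "(\<Sum>t = m..<Suc N. (a t)^2) \<ge> 0" by (intro sum_nonneg) auto
      then show ?thesis using M[OF mM, of "Suc N"] by simp
    qed
    finally have "real (Suc N - m) * f^2 < \<epsilon>^2/2" by simp
    moreover have "real N / 2 \<le> real (Suc N - m)" unfolding m_def by linarith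
    ultimately have "real N / 2 * f^2 < \<epsilon>^2/2"
      by (meson f0 le_less_trans mult_right_mono zero_le_power2)
    then have "real N * f^2 < \<epsilon>^2" by simp
    then have "sqrt (real N * f^2) < sqrt (\<epsilon>^2)" by (rule real_sqrt_less_mono)
    then have "sqrt (real N) * f < \<epsilon>" using f0 e by (simp add: real_sqrt_mult)
    moreover have "N > 0" using NM by simp
    ultimately have "f \<le> \<epsilon> / sqrt (real N)" by (simp add: pos_le_divide_eq mult.commute)
    then show "norm (Min (a ` {0..N})) \<le> \<epsilon> * norm (1 / sqrt (real N))"
      using f0 by (simp add: f_def)
  qed
qed


theorem theorem4:
  fixes F :: "'a::euclidean_space \<Rightarrow> real"
    and gradF :: "'a \<Rightarrow> 'a"
    and G :: "'a \<Rightarrow> ereal"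
    and L \<gamma> :: real
    and x y z :: "nat \<Rightarrow> 'a"
    and yb zb xb :: 'a
  assumes F_convex: "convex_on UNIV F"
    and F_grad: "\<And>u. (F has_derivative (\<lambda>h. gradF u \<bullet> h)) (at u)"
    and L_pos: "L > 0"
    and grad_Lip: "\<And>u v. norm (gradF u - gradF v) \<le> L * norm (u - v)"
    and G_proper: "proper_fun G"
    and G_lsc: "lsc_fun G"
    and G_convex: "convex_efun G"
    and G_prox: "\<And>w \<tau>. \<tau> > 0 \<Longrightarrow> \<exists>u. \<forall>v.
        ereal \<tau> * G u + ereal ((1/2) * (norm (u - w))\<^sup>2)
          \<le> ereal \<tau> * G v + ereal ((1/2) * (norm (v - w))\<^sup>2)"
    and coercive: "coercive_efun (\<lambda>u. ereal (F u) + G u)"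
    and gamma_pos: "\<gamma> > 0"
    and gamma_small: "\<gamma> < 1 / (12 * L)"
    and y_step: "\<And>t w.
        F (y (Suc t)) + (5 * L / 2) * (norm (y (Suc t)))\<^sup>2
          + (1 / (2 * \<gamma>)) * (norm (y (Suc t) - x t))\<^sup>2
        \<le> F w + (5 * L / 2) * (norm w)\<^sup>2 + (1 / (2 * \<gamma>)) * (norm (w - x t))\<^sup>2"
    and z_step: "\<And>t w.
        G (z (Suc t)) - ereal ((5 * L / 2) * (norm (z (Suc t)))\<^sup>2)
          + ereal ((1 / (2 * \<gamma>)) * (norm (2 *\<^sub>R y (Suc t) - x t - z (Suc t)))\<^sup>2)
        \<le> G w - ereal ((5 * L / 2) * (norm w)\<^sup>2)
          + ereal ((1 / (2 * \<gamma>)) * (norm (2 *\<^sub>R y (Suc t) - x t - w))\<^sup>2)"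
    and x_step: "\<And>t. x (Suc t) = x t + 2 *\<^sub>R (z (Suc t) - y (Suc t))"
    and cluster: "\<exists>r. strict_mono r \<and>
        ((\<lambda>k. (y (r k), z (r k), x (r k))) \<longlongrightarrow> (yb, zb, xb)) sequentially"
  shows "yb = zb
    \<and> (\<forall>u. ereal (F zb) + G zb \<le> ereal (F u) + G u)
    \<and> (\<forall>N::nat. N \<ge> 1 \<longrightarrow>
         (let zN = (1 / real N) *\<^sub>R (\<Sum>t = 1..N. z t) in
           ereal (F zN) + G zN - ereal (F zb) - G zb
             \<le> ereal (1 / (40 * \<gamma> * real N * L) * (1 / \<gamma> - 5 * L)
                        * (norm (x 0 - xb))\<^sup>2)))
    \<and> (\<lambda>N. Min ((\<lambda>t. norm (x (Suc t) - x t)) ` {0..N}))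
        \<in> o(\<lambda>N. 1 / sqrt (real N))"
proof -
  interpret prs F gradF G L \<gamma> x y z
    by (unfold_locales) (fact assms)+
  obtain \<rho> where sm: "strict_mono \<rho>"
    and lim: "((\<lambda>k. (y (\<rho> k), z (\<rho> k), x (\<rho> k))) \<longlongrightarrow> (yb, zb, xb)) sequentially"
    using cluster by blast
  note cp = cluster_props[OF sm lim]
  have o: "(\<lambda>N. Min ((\<lambda>t. norm (x (Suc t) - x t)) ` {0..N})) \<in> o(\<lambda>N. 1 / sqrt (real N))"
    by (rule min_o) (use summable_dx in auto)
  have r: "\<forall>N::nat. N \<ge> 1 \<longrightarrow>
         (let zN = (1 / real N) *\<^sub>R (\<Sum>t = 1..N. z t) in
           ereal (F zN) + G zN - ereal (F zb) - G zb
             \<le> ereal (1 / (40 * \<gamma> * real N * L) * (1 / \<gamma> - 5 * L)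
                        * (norm (x 0 - xb))\<^sup>2))"
    using rate[OF cp(2) cp(3)] by (simp add: Let_def)
  show ?thesis using cp(1) cp(2) r o by blast
qed

end
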